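(* Let $(S,\mathcal C)$ be a connectoid that has a normal spanning tree $T$. Then there is a bijection between the ends of $(S,\mathcal C)$ and the ends of the (graph-theoretic) tree $T$.
   Context: A connectoid is given by a set $S$ and a set $\mathcal F$ of finite subsets of $S$ such that (i) $F\cup F'\in\mathcal F$ whenever $F,F'\in\mathcal F$ and $F\cap F'\neq\emptyset$, and (ii) $\emptyset\in\mathcal F$ and $\{s\}\in\mathcal F$ for every $s\in S$. A set $C\subseteq S$ is connected if for all $x,y\in C$ there is $F\in\mathcal F$ with $F\subseteq C$ and $x,y\in F$; $\mathcal C$ is the set of connected sets and $(S,\mathcal C)$ is the connectoid. For $S'\subseteq S$, a component of $S'$ is a maximal connected subset of $S'$, and $\mathcal K(S')$ is the set of components of $S'$. "Almost all" means all but finitely many. A necklace is a connected set $N$ for which there is a family $(H_n)_{n\in\mathbb N}$ of finite connected sets with $N=\bigcup_n H_n$ and $H_i\cap H_j\neq\emptyset$ iff $|i-j|\le 1$. For a necklace $N$ and finite $X\subseteq S$, the $X$-tail of $N$ is the unique element of $\mathcal K(N\setminus X)$ containing almost all elements of $N$. Two necklaces are equivalent if for every finite $X\subseteq S$ their $X$-tails lie in the same element of $\mathcal K(S\setminus X)$. An end of $(S,\mathcal C)$ is an equivalence class of necklaces. Ends of the tree $T$ are the usual graph-theoretic ends (equivalence classes of rays). For a rooted tree $T$ with tree order $\le_T$ (root is the minimum) and $t\in V(T)$, let $\mathrm{Down}_T(t)=\{x\in V(T):x\le_T t\}$ and $\mathrm{Down}^\circ_T(t)=\mathrm{Down}_T(t)\setminus\{t\}$.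 A weak normal tree of $(S,\mathcal C)$ is a rooted undirected tree $T$ with $V(T)\subseteq S$ such that (1) for every $C\in\mathcal C$ and every two $\le_T$-incomparable $u,v\in C\cap V(T)$ there is $w\in C$ with $w\le_T u$ and $w\le_T v$, and (2) for all $u\le_T v$ in $V(T)$ there is $C\in\mathcal C$ containing $u$ and $v$ with $C\cap\mathrm{Down}^\circ_T(u)=\emptyset$. It is a normal tree if additionally for every rooted ray $R$ of $T$ (ray starting at the root) there is a necklace containing almost all vertices of $R$. It is spanning if $V(T)=S$. *)

theory Defs
  imports Main
begin

definition connectoid :: "'a set \<Rightarrow> 'a set set \<Rightarrow> bool" where
  "connectoid S \<F> \<longleftrightarrow>
     (\<forall>F\<in>\<F>. finite F \<and> F \<subseteq> S) \<and>
     (\<forall>F\<in>\<F>. \<forall>F'\<in>\<F>. F \<inter> F' \<noteq> {} \<longrightarrow> F \<union> F' \<in> \<F>) \<and>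
     {} \<in> \<F> \<and> (\<forall>s\<in>S. {s} \<in> \<F>)"

definition cn_connected :: "'a set \<Rightarrow> 'a set set \<Rightarrow> 'a set \<Rightarrow> bool" where
  "cn_connected S \<F> C \<longleftrightarrow> C \<subseteq> S \<and>
     (\<forall>x\<in>C. \<forall>y\<in>C. \<exists>F\<in>\<F>. F \<subseteq> C \<and> x \<in> F \<and> y \<in> F)"

definition cn_components :: "'a set \<Rightarrow> 'a set set \<Rightarrow> 'a set \<Rightarrow> 'a set set" where
  "cn_components S \<F> A = {K. K \<subseteq> A \<and> cn_connected S \<F> K \<and>
     (\<forall>K'. K \<subseteq> K' \<and> K' \<subseteq> A \<and> cn_connected S \<F> K' \<longrightarrow> K' = K)}"

definition necklace :: "'a set \<Rightarrow> 'a set set \<Rightarrow> 'a set \<Rightarrow> bool" where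
  "necklace S \<F> N \<longleftrightarrow> cn_connected S \<F> N \<and>
     (\<exists>H :: nat \<Rightarrow> 'a set. (\<forall>n. finite (H n) \<and> cn_connected S \<F> (H n)) \<and>
        N = (\<Union>n. H n) \<and>
        (\<forall>i j. H i \<inter> H j \<noteq> {} \<longleftrightarrow> (i \<le> j + 1 \<and> j \<le> i + 1)))"

definition necklace_tail :: "'a set \<Rightarrow> 'a set set \<Rightarrow> 'a set \<Rightarrow> 'a set \<Rightarrow> 'a set" where
  "necklace_tail S \<F> N X = (THE K. K \<in> cn_components S \<F> (N - X) \<and> finite (N - K))"

definition necklace_equiv :: "'a set \<Rightarrow> 'a set set \<Rightarrow> 'a set \<Rightarrow> 'a set \<Rightarrow> bool" where
  "necklace_equiv S \<F> N N' \<longleftrightarrow>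
     (\<forall>X. finite X \<and> X \<subseteq> S \<longrightarrow>
        (\<exists>K\<in>cn_components S \<F> (S - X).
            necklace_tail S \<F> N X \<subseteq> K \<and> necklace_tail S \<F> N' X \<subseteq> K))"

definition cn_ends :: "'a set \<Rightarrow> 'a set set \<Rightarrow> 'a set set set" where
  "cn_ends S \<F> = {{N'. necklace S \<F> N' \<and> necklace_equiv S \<F> N N'} | N. necklace S \<F> N}"

definition ugraph :: "'a set \<Rightarrow> ('a \<times> 'a) set \<Rightarrow> bool" where
  "ugraph V E \<longleftrightarrow> E \<subseteq> V \<times> V \<and> sym E \<and> irrefl E"

definition gpath :: "'a set \<Rightarrow> ('a \<times> 'a) set \<Rightarrow> 'a list \<Rightarrow> bool" where
  "gpath V E xs \<longleftrightarrow> xs \<noteq> [] \<and> distinct xs \<and> set xs \<subseteq> V \<and>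
     (\<forall>i. Suc i < length xs \<longrightarrow> (xs ! i, xs ! Suc i) \<in> E)"

definition gconnected :: "'a set \<Rightarrow> ('a \<times> 'a) set \<Rightarrow> bool" where
  "gconnected V E \<longleftrightarrow> (\<forall>x\<in>V. \<forall>y\<in>V. \<exists>xs. gpath V E xs \<and> hd xs = x \<and> last xs = y)"

definition acyclic_graph :: "'a set \<Rightarrow> ('a \<times> 'a) set \<Rightarrow> bool" where
  "acyclic_graph V E \<longleftrightarrow> \<not> (\<exists>xs. gpath V E xs \<and> length xs \<ge> 3 \<and> (last xs, hd xs) \<in> E)"

definition is_tree :: "'a set \<Rightarrow> ('a \<times> 'a) set \<Rightarrow> bool" where
  "is_tree V E \<longleftrightarrow> ugraph V E \<and> V \<noteq> {} \<and> gconnected V E \<and> acyclic_graph V E"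

definition tree_le :: "'a set \<Rightarrow> ('a \<times> 'a) set \<Rightarrow> 'a \<Rightarrow> 'a \<Rightarrow> 'a \<Rightarrow> bool" where
  "tree_le V E r x y \<longleftrightarrow> x \<in> V \<and> y \<in> V \<and>
     (\<exists>xs. gpath V E xs \<and> hd xs = r \<and> last xs = y \<and> x \<in> set xs)"

definition tree_down :: "'a set \<Rightarrow> ('a \<times> 'a) set \<Rightarrow> 'a \<Rightarrow> 'a \<Rightarrow> 'a set" where
  "tree_down V E r t = {x \<in> V. tree_le V E r x t}"

definition tree_down_strict :: "'a set \<Rightarrow> ('a \<times> 'a) set \<Rightarrow> 'a \<Rightarrow> 'a \<Rightarrow> 'a set" where
  "tree_down_strict V E r t = tree_down V E r t - {t}"

definition is_ray :: "'a set \<Rightarrow> ('a \<times> 'a) set \<Rightarrow> (nat \<Rightarrow> 'a) \<Rightarrow> bool" where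
  "is_ray V E R \<longleftrightarrow> inj R \<and> (\<forall>n. R n \<in> V \<and> (R n, R (Suc n)) \<in> E)"

definition ray_equiv :: "'a set \<Rightarrow> ('a \<times> 'a) set \<Rightarrow> (nat \<Rightarrow> 'a) \<Rightarrow> (nat \<Rightarrow> 'a) \<Rightarrow> bool" where
  "ray_equiv V E R R' \<longleftrightarrow>
     (\<forall>X. finite X \<longrightarrow> (\<exists>m n xs. (\<forall>k\<ge>m. R k \<notin> X) \<and> (\<forall>k\<ge>n. R' k \<notin> X) \<and>
         gpath (V - X) (E \<inter> ((V - X) \<times> (V - X))) xs \<and> hd xs = R m \<and> last xs = R' n))"

definition graph_ends :: "'a set \<Rightarrow> ('a \<times> 'a) set \<Rightarrow> (nat \<Rightarrow> 'a) set set" where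
  "graph_ends V E = {{R'. is_ray V E R' \<and> ray_equiv V E R R'} | R. is_ray V E R}"

definition weak_normal_tree ::
  "'a set \<Rightarrow> 'a set set \<Rightarrow> 'a set \<Rightarrow> ('a \<times> 'a) set \<Rightarrow> 'a \<Rightarrow> bool" where
  "weak_normal_tree S \<F> V E r \<longleftrightarrow>
     is_tree V E \<and> r \<in> V \<and> V \<subseteq> S \<and>
     (\<forall>C. cn_connected S \<F> C \<longrightarrow>
        (\<forall>u\<in>C \<inter> V. \<forall>v\<in>C \<inter> V. \<not> tree_le V E r u v \<and> \<not> tree_le V E r v u \<longrightarrow>
            (\<exists>w\<in>C. tree_le V E r w u \<and> tree_le V E r w v))) \<and>
     (\<forall>u v. tree_le V E r u v \<longrightarrow>
        (\<exists>C. cn_connected S \<F> C \<and> u \<in> C \<and> v \<in> C \<and> C \<inter> tree_down_strict V E r u = {}))"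

definition normal_tree ::
  "'a set \<Rightarrow> 'a set set \<Rightarrow> 'a set \<Rightarrow> ('a \<times> 'a) set \<Rightarrow> 'a \<Rightarrow> bool" where
  "normal_tree S \<F> V E r \<longleftrightarrow> weak_normal_tree S \<F> V E r \<and>
     (\<forall>R. is_ray V E R \<and> R 0 = r \<longrightarrow>
        (\<exists>N. necklace S \<F> N \<and> finite {n. R n \<notin> N}))"

definition normal_spanning_tree ::
  "'a set \<Rightarrow> 'a set set \<Rightarrow> 'a set \<Rightarrow> ('a \<times> 'a) set \<Rightarrow> 'a \<Rightarrow> bool" where
  "normal_spanning_tree S \<F> V E r \<longleftrightarrow> normal_tree S \<F> V E r \<and> V = S"

end

theory Submission
  imports Defs
begin


lemma gpath_succ: "gpath V E xs \<longleftrightarrow> xs \<noteq> [] \<and> distinct xs \<and> set xs \<subseteq> V \<and>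
   successively (\<lambda>x y. (x,y) \<in> E) xs"
  unfolding gpath_def successively_conv_nth by auto

lemma gpath_prefix: "gpath V E (p @ q) \<Longrightarrow> p \<noteq> [] \<Longrightarrow> gpath V E p"
  unfolding gpath_succ by (auto simp: successively_append_iff)

lemma gpath_mono: "gpath V E xs \<Longrightarrow> set xs \<subseteq> W \<Longrightarrow> E \<inter> (W \<times> W) \<subseteq> E' \<Longrightarrow> gpath W E' xs"
  unfolding gpath_succ by (auto elim!: successively_mono)

lemma gpath_tl: "gpath V E (a # xs) \<Longrightarrow> xs \<noteq> [] \<Longrightarrow> gpath V E xs"
  unfolding gpath_succ by (auto simp: successively_Cons)

lemma distinct_hd_last: "distinct xs \<Longrightarrow> xs \<noteq> [] \<Longrightarrow> hd xs = last xs \<Longrightarrow> xs = [hd xs]"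
  by (cases xs) (auto split: if_splits)

lemma path_unique:
  assumes ug: "ugraph V E" and ac: "acyclic_graph V E"
  shows "gpath V E xs \<Longrightarrow> gpath V E ys \<Longrightarrow> hd xs = hd ys \<Longrightarrow> last xs = last ys \<Longrightarrow> xs = ys"
proof (induction xs arbitrary: ys)
  case Nil then show ?case by (simp add: gpath_def)
next
  case (Cons a xs1)
  have symE: "sym E" using ug by (simp add: ugraph_def)
  show ?case
  proof (cases "xs1 = []")
    case True
    then have "hd ys = last ys" using Cons.prems by simp
    then have "ys = [hd ys]" using Cons.prems(2) distinct_hd_last unfolding gpath_def by blast
    then show ?thesis using Cons.prems True by (metis list.sel(1))
  next
    case xs1ne: False
    obtain ys1 where ys: "ys = a # ys1" using Cons.prems by (cases ys) (auto simp: gpath_def)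
    have ys1ne: "ys1 \<noteq> []"
    proof
      assume "ys1 = []"
      then have "last (a # xs1) = a" using Cons.prems ys by simp
      then show False using xs1ne Cons.prems(1) unfolding gpath_def
        by (metis distinct.simps(2) last_ConsR last_in_set)
    qed
    obtain b xs' where xs1: "xs1 = b # xs'" using xs1ne by (cases xs1) auto
    obtain c ys' where ys1: "ys1 = c # ys'" using ys1ne by (cases ys1) auto
    have gx: "gpath V E xs1" by (rule gpath_tl[OF Cons.prems(1) xs1ne])
    have gy: "gpath V E ys1" using gpath_tl[of V E a ys1] Cons.prems(2) ys ys1ne by simp
    have lastx: "last xs1 = last ys1" using Cons.prems ys xs1ne ys1ne by simp
    show ?thesis
    proof (cases "b = c")
      case True
      then have "xs1 = ys1" using Cons.IH[OF gx gy] xs1 ys1 lastx by simp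
      then show ?thesis using ys by simp
    next
      case bc: False
      define p where "p = takeWhile (\<lambda>x. x \<notin> set ys1) xs1"
      define rest where "rest = dropWhile (\<lambda>x. x \<notin> set ys1) xs1"
      have xsplit: "xs1 = p @ rest" unfolding p_def rest_def by simp
      have "last xs1 \<in> set ys1" using lastx ys1ne by simp
      then have restne: "rest \<noteq> []" unfolding rest_def using xs1ne
        by (metis dropWhile_eq_Nil_conv last_in_set)
      obtain z' rest' where rest: "rest = z' # rest'" using restne by (cases rest) auto
      have z'y: "z' \<in> set ys1" using rest unfolding rest_def
        by (metis dropWhile_eq_Cons_conv)
      have pnot: "\<forall>x\<in>set p. x \<notin> set ys1" unfolding p_def by (auto dest: set_takeWhileD)
      obtain u w where ysplit: "ys1 = u @ z' # w" using z'y by (meson split_list)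
      define cyc where "cyc = a # p @ z' # rev u"
      have dx: "distinct (a # xs1)" and dy: "distinct (a # ys1)"
        using Cons.prems ys unfolding gpath_def by auto
      have sx: "successively (\<lambda>x y. (x,y) \<in> E) (a # xs1)"
        and sy: "successively (\<lambda>x y. (x,y) \<in> E) (a # ys1)"
        using Cons.prems ys unfolding gpath_succ by auto
      have setx: "set (a # xs1) \<subseteq> V" and sety: "set (a # ys1) \<subseteq> V"
        using Cons.prems ys unfolding gpath_def by auto
      have dist: "distinct cyc"
      proof -
        have d1: "distinct (a # p @ z' # rest')" using dx xsplit rest by simp
        have d2: "distinct (a # u @ z' # w)" using dy ysplit by simp
        have d3: "\<forall>x\<in>set p. x \<notin> set u \<and> x \<noteq> z'" using pnot ysplit by simp
        show ?thesis unfolding cyc_def using d1 d2 d3 by auto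
      qed
      have sub: "set cyc \<subseteq> V" using setx sety unfolding cyc_def xsplit rest ysplit by auto
      have ab: "(a, b) \<in> E" using sx xs1 by simp
      have ca: "(c, a) \<in> E" using sy ys1 symE by (simp add: sym_def)
      have hdp: "hd (p @ [z']) = b" using xs1 xsplit rest by (cases p) auto
      have "successively (\<lambda>x y. (x,y) \<in> E) xs1" using sx by (auto simp: successively_Cons)
      then have "successively (\<lambda>x y. (x,y) \<in> E) ((p @ [z']) @ rest')" using xsplit rest by simp
      then have s1: "successively (\<lambda>x y. (x,y) \<in> E) (p @ [z'])"
        using successively_append_iff by blast
      have "successively (\<lambda>x y. (x,y) \<in> E) ys1" using sy by (auto simp: successively_Cons)
      then have "successively (\<lambda>x y. (x,y) \<in> E) ((u @ [z']) @ w)" using ysplit by simp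
      then have s2: "successively (\<lambda>x y. (x,y) \<in> E) (u @ [z'])"
        using successively_append_iff by blast
      have s2': "successively (\<lambda>x y. (x,y) \<in> E) (z' # rev u)"
      proof -
        have "successively (\<lambda>x y. (y,x) \<in> E) (u @ [z'])"
          using s2 by (rule successively_mono) (use symE in \<open>auto simp: sym_def\<close>)
        then have "successively (\<lambda>x y. (x,y) \<in> E) (rev (u @ [z']))"
          by (simp only: successively_rev)
        then show ?thesis by simp
      qed
      have succ: "successively (\<lambda>x y. (x,y) \<in> E) cyc"
      proof -
        have "successively (\<lambda>x y. (x,y) \<in> E) ((p @ [z']) @ rev u)"
          using s1 s2' by (auto simp: successively_append_iff successively_Cons)
        then have "successively (\<lambda>x y. (x,y) \<in> E) (a # (p @ [z']) @ rev u)"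
          using ab hdp by (cases p) (auto simp: successively_Cons)
        then show ?thesis unfolding cyc_def by simp
      qed
      have len_last: "length cyc \<ge> 3 \<and> (last cyc, hd cyc) \<in> E"
      proof (cases u)
        case Nil
        then have "z' = c" using ysplit ys1 by simp
        moreover have "p \<noteq> []" using hdp bc calculation by auto
        ultimately show ?thesis using ca unfolding cyc_def Nil by (cases p) auto
      next
        case (Cons u0 us)
        then have "u0 = c" using ysplit ys1 by simp
        then show ?thesis using ca unfolding cyc_def Cons by auto
      qed
      have "gpath V E cyc" using dist sub succ unfolding gpath_succ cyc_def by auto
      then show ?thesis using len_last ac unfolding acyclic_graph_def by blast
    qed
  qed
qed




locale nt =
  fixes S :: "'a set" and F :: "'a set set" and V :: "'a set" and E :: "('a \<times> 'a) set" and r :: 'a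
  assumes cn: "connectoid S F" and nst: "normal_spanning_tree S F V E r"
begin

lemma tree: "is_tree V E" and rV: "r \<in> V" and VS: "V = S"
  using nst unfolding normal_spanning_tree_def normal_tree_def weak_normal_tree_def by auto

lemma ug: "ugraph V E" and ac: "acyclic_graph V E" and gc: "gconnected V E"
  using tree unfolding is_tree_def by auto

lemma symE: "(x,y) \<in> E \<Longrightarrow> (y,x) \<in> E" using ug unfolding ugraph_def sym_def by blast
lemma irrE: "(x,x) \<notin> E" using ug unfolding ugraph_def irrefl_def by blast
lemma EV: "(x,y) \<in> E \<Longrightarrow> x \<in> V \<and> y \<in> V" using ug unfolding ugraph_def by blast

definition P :: "'a \<Rightarrow> 'a list" where
  "P y = (THE xs. gpath V E xs \<and> hd xs = r \<and> last xs = y)"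

abbreviation le :: "'a \<Rightarrow> 'a \<Rightarrow> bool" where "le x y \<equiv> tree_le V E r x y"

definition Up :: "'a \<Rightarrow> 'a set" where "Up t = {x\<in>V. le t x}"

definition depth :: "'a \<Rightarrow> nat" where "depth x = length (P x)"

lemma P_uniq: "gpath V E xs \<Longrightarrow> hd xs = r \<Longrightarrow> last xs = y \<Longrightarrow> P y = xs"
  unfolding P_def
  by (rule the_equality) (auto intro: path_unique[OF ug ac])

lemma P_prop: assumes "y \<in> V" shows "gpath V E (P y) \<and> hd (P y) = r \<and> last (P y) = y"
proof -
  obtain xs where "gpath V E xs" "hd xs = r" "last xs = y"
    using gc rV assms unfolding gconnected_def by blast
  then show ?thesis using P_uniq by auto
qed

lemma P_ne: "y \<in> V \<Longrightarrow> P y \<noteq> []" using P_prop unfolding gpath_def by blast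
lemma P_last: "y \<in> V \<Longrightarrow> y \<in> set (P y)" using P_prop P_ne by (metis last_in_set)
lemma P_hd: "y \<in> V \<Longrightarrow> r \<in> set (P y)" using P_prop P_ne by (metis hd_in_set)
lemma P_V: "y \<in> V \<Longrightarrow> set (P y) \<subseteq> V" using P_prop unfolding gpath_def by blast
lemma P_dist: "y \<in> V \<Longrightarrow> distinct (P y)" using P_prop unfolding gpath_def by blast

lemma le_iff: "le x y \<longleftrightarrow> y \<in> V \<and> x \<in> set (P y)"
proof
  assume "le x y"
  then obtain xs where "gpath V E xs" "hd xs = r" "last xs = y" "x \<in> set xs" "y \<in> V"
    unfolding tree_le_def by blast
  then show "y \<in> V \<and> x \<in> set (P y)" using P_uniq by auto
next
  assume "y \<in> V \<and> x \<in> set (P y)"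
  then show "le x y" unfolding tree_le_def using P_prop P_V by blast
qed

lemma le_V: "le x y \<Longrightarrow> x \<in> V \<and> y \<in> V" unfolding tree_le_def by blast

lemma P_prefix: assumes "y \<in> V" "x \<in> set (P y)" shows "\<exists>q. P y = P x @ q"
proof -
  obtain p q where pq: "P y = p @ x # q" using assms(2) by (meson split_list)
  have g: "gpath V E (p @ [x])" using gpath_prefix[of V E "p @ [x]" q] P_prop[OF assms(1)] pq by simp
  have "hd (p @ [x]) = r" using P_prop[OF assms(1)] pq by (cases p) auto
  then have "P x = p @ [x]" by (intro P_uniq[OF g]) auto
  then show ?thesis using pq by simp
qed

lemma le_refl: "x \<in> V \<Longrightarrow> le x x" using le_iff P_last by blast
lemma le_r: "x \<in> V \<Longrightarrow> le r x" using le_iff P_hd by blast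

lemma le_subset: "le x y \<Longrightarrow> set (P x) \<subseteq> set (P y)"
  using P_prefix le_iff by fastforce

lemma le_trans: "le x y \<Longrightarrow> le y z \<Longrightarrow> le x z"
  using le_subset le_iff le_V by blast

lemma le_antisym: assumes "le x y" "le y x" shows "x = y"
proof -
  obtain q1 where q1: "P y = P x @ q1" using assms(1) P_prefix le_iff by blast
  obtain q2 where q2: "P x = P y @ q2" using assms(2) P_prefix le_iff by blast
  have "q1 = []" using q1 q2 by simp
  then have "P x = P y" using q1 by simp
  then show ?thesis using P_prop le_V assms by metis
qed

lemma chain: assumes "le x u" "le c u" shows "le x c \<or> le c x"
proof -
  have uV: "u \<in> V" using assms le_V by blast
  obtain q1 where q1: "P u = P x @ q1" using assms(1) P_prefix le_iff by blast
  obtain q2 where q2: "P u = P c @ q2" using assms(2) P_prefix le_iff by blast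
  have xV: "x \<in> V" and cV: "c \<in> V" using assms le_V by auto
  show ?thesis
  proof (cases "length (P x) \<le> length (P c)")
    case True
    have "take (length (P x)) (P c @ q2) = take (length (P x)) (P c)" using True by simp
    moreover have "take (length (P x)) (P x @ q1) = P x" by simp
    ultimately have "P x = take (length (P x)) (P c)" by (metis q1 q2)
    then have "x \<in> set (P c)" using P_last[OF xV] by (metis in_set_takeD)
    then show ?thesis using le_iff cV by blast
  next
    case False
    have "take (length (P c)) (P x @ q1) = take (length (P c)) (P x)" using False by simp
    moreover have "take (length (P c)) (P c @ q2) = P c" by simp
    ultimately have "P c = take (length (P c)) (P x)" by (metis q1 q2)
    then have "c \<in> set (P x)" using P_last[OF cV] by (metis in_set_takeD)
    then show ?thesis using le_iff xV by blast
  qed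
qed

lemma depth_mono: assumes "le x y" shows "depth x \<le> depth y"
  using P_prefix[of y x] assms le_iff unfolding depth_def by auto

lemma depth_eq: assumes "le x y" "depth x = depth y" shows "x = y"
proof -
  obtain q where "P y = P x @ q" using assms(1) P_prefix le_iff by blast
  then have "P y = P x" using assms(2) unfolding depth_def by simp
  then show ?thesis using P_prop le_V assms by metis
qed

lemma depth_pos: "x \<in> V \<Longrightarrow> depth x \<ge> 1"
  using P_ne unfolding depth_def by (simp add: Suc_le_eq)

lemma edge: assumes "(x,y) \<in> E" shows "P y = P x @ [y] \<or> P x = P y @ [x]"
proof -
  have xV: "x \<in> V" and yV: "y \<in> V" using EV assms by auto
  show ?thesis
  proof (cases "y \<in> set (P x)")
    case False
    have "successively (\<lambda>x y. (x,y) \<in> E) (P x)" using P_prop[OF xV] unfolding gpath_succ by blast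
    moreover have "last (P x) = x" using P_prop[OF xV] by blast
    moreover have "P x \<noteq> []" using P_ne[OF xV] .
    ultimately have "successively (\<lambda>x y. (x,y) \<in> E) (P x @ [y])"
      using assms by (simp add: successively_append_iff)
    moreover have "distinct (P x @ [y])" using P_dist[OF xV] False by simp
    moreover have "set (P x @ [y]) \<subseteq> V" using P_V[OF xV] yV by simp
    ultimately have g2: "gpath V E (P x @ [y])" unfolding gpath_succ by simp
    have h2: "hd (P x @ [y]) = r" using P_prop[OF xV] P_ne[OF xV] by simp
    have "last (P x @ [y]) = y" by simp
    from P_uniq[OF g2 h2 this] have "P y = P x @ [y]" .
    then show ?thesis by blast
  next
    case True
    have "x \<notin> set (P y)"
    proof
      assume "x \<in> set (P y)"
      then have "x = y" using True le_antisym le_iff xV yV by blast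
      then show False using assms irrE by simp
    qed
    have "successively (\<lambda>x y. (x,y) \<in> E) (P y)" using P_prop[OF yV] unfolding gpath_succ by blast
    moreover have "last (P y) = y" using P_prop[OF yV] by blast
    moreover have "P y \<noteq> []" using P_ne[OF yV] .
    ultimately have "successively (\<lambda>x y. (x,y) \<in> E) (P y @ [x])"
      using symE[OF assms] by (simp add: successively_append_iff)
    moreover have "distinct (P y @ [x])" using P_dist[OF yV] \<open>x \<notin> set (P y)\<close> by simp
    moreover have "set (P y @ [x]) \<subseteq> V" using P_V[OF yV] xV by simp
    ultimately have g2: "gpath V E (P y @ [x])" unfolding gpath_succ by simp
    have h2: "hd (P y @ [x]) = r" using P_prop[OF yV] P_ne[OF yV] by simp
    have "last (P y @ [x]) = x" by simp
    from P_uniq[OF g2 h2 this] have "P x = P y @ [x]" .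
    then show ?thesis by blast
  qed
qed

lemma child: assumes "le t u" "t \<noteq> u" shows "\<exists>c\<in>V. P c = P t @ [c] \<and> le c u"
proof -
  have uV: "u \<in> V" and tV: "t \<in> V" using assms le_V by auto
  obtain q where q: "P u = P t @ q" using assms(1) P_prefix le_iff by blast
  have "q \<noteq> []" using q assms P_prop uV tV by (metis append_Nil2)
  then obtain c q' where cq: "q = c # q'" by (cases q) auto
  have g: "gpath V E (P t @ [c])" using gpath_prefix[of V E "P t @ [c]" q'] P_prop[OF uV] q cq by simp
  have "hd (P t @ [c]) = r" using P_prop[OF tV] P_ne[OF tV] by simp
  moreover have "last (P t @ [c]) = c" by simp
  ultimately have Pc: "P c = P t @ [c]" by (rule P_uniq[OF g])
  have cV: "c \<in> V" using g unfolding gpath_def by auto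
  have "le c u" using le_iff uV q cq by auto
  then show ?thesis using Pc cV by blast
qed

lemma child_props: assumes "P c = P t @ [c]" "c \<in> V" "t \<in> V"
  shows "le t c" "depth c = Suc (depth t)" "(t,c) \<in> E" "tree_down_strict V E r c = set (P t)"
proof -
  have g: "gpath V E (P c)" using P_prop[OF assms(2)] by blast
  have ht: "last (P t) = t" using P_prop[OF assms(3)] by blast
  have hne: "P t \<noteq> []" using P_ne[OF assms(3)] .
  have "t \<in> set (P c)" using P_last[OF assms(3)] assms(1) by simp
  then show "le t c" using le_iff assms(2) by blast
  show "depth c = Suc (depth t)" unfolding depth_def assms(1) by simp
  have "successively (\<lambda>x y. (x,y) \<in> E) (P t @ [c])" using g unfolding gpath_succ assms(1) by blast
  then have "(last (P t), hd [c]) \<in> E" using hne unfolding successively_append_iff by blast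
  then show "(t,c) \<in> E" using ht by simp
  have "distinct (P t @ [c])" using P_dist[OF assms(2)] unfolding assms(1) .
  then have "c \<notin> set (P t)" by simp
  moreover have "set (P c) = insert c (set (P t))" unfolding assms(1) by simp
  ultimately show "tree_down_strict V E r c = set (P t)"
    unfolding tree_down_strict_def tree_down_def using le_iff assms P_V by auto
qed

lemma parent: assumes "x \<in> V" "x \<noteq> r" shows "\<exists>p\<in>V. P x = P p @ [x]"
proof -
  have "le r x" "r \<noteq> x" using le_r assms by auto
  have "length (P x) \<ge> 2"
  proof (rule ccontr)
    assume "\<not> ?thesis"
    moreover have "length (P x) \<noteq> 0" using P_ne[OF assms(1)] by simp
    ultimately have "length (P x) = Suc 0" by arith
    then obtain a where "P x = [a]" by (auto simp: length_Suc_conv)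
    then have "hd (P x) = last (P x)" by simp
    then show False using P_prop[OF assms(1)] assms by metis
  qed
  define b where "b = butlast (P x)"
  have bne: "b \<noteq> []" using \<open>length (P x) \<ge> 2\<close> unfolding b_def by (cases "P x") auto
  have px: "P x = b @ [x]" unfolding b_def using P_prop[OF assms(1)] P_ne[OF assms(1)]
    by (metis append_butlast_last_id)
  have g: "gpath V E b" using gpath_prefix[of V E b "[x]"] P_prop[OF assms(1)] px bne by simp
  have "hd b = r" using P_prop[OF assms(1)] px bne by simp
  moreover have "last b = last b" ..
  ultimately have "P (last b) = b" by (rule P_uniq[OF g])
  moreover have "last b \<in> V" using g bne unfolding gpath_def by auto
  ultimately show ?thesis using px by metis
qed

lemma le_I: "y \<in> V \<Longrightarrow> x \<in> set (P y) \<Longrightarrow> le x y" using le_iff by blast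
lemma le_D: "le x y \<Longrightarrow> x \<in> set (P y)" using le_iff by blast

lemma tds_iff: "y \<in> tree_down_strict V E r c \<longleftrightarrow> le y c \<and> y \<noteq> c"
  unfolding tree_down_strict_def tree_down_def using le_V by blast

lemma EU: assumes "le c x" "(x,y) \<in> E" "y \<notin> tree_down_strict V E r c" shows "le c y"
proof -
  have yV: "y \<in> V" and xV: "x \<in> V" using EV assms(2) by auto
  from edge[OF assms(2)] show ?thesis
  proof
    assume "P y = P x @ [y]"
    then have "x \<in> set (P y)" using P_last[OF xV] by simp
    then have "le x y" using le_I yV by blast
    then show ?thesis using le_trans assms(1) by blast
  next
    assume "P x = P y @ [x]"
    then have "y \<in> set (P x)" using P_last[OF yV] by simp
    then have "le y x" using le_I xV by blast
    then have "le y c \<or> le c y" using chain assms(1) by blast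
    then show ?thesis using assms(3) tds_iff by blast
  qed
qed

lemma wnt: "weak_normal_tree S F V E r"
  using nst unfolding normal_spanning_tree_def normal_tree_def by blast

lemma wn1_all: "\<forall>C. cn_connected S F C \<longrightarrow>
        (\<forall>u\<in>C \<inter> V. \<forall>v\<in>C \<inter> V. \<not> le u v \<and> \<not> le v u \<longrightarrow>
            (\<exists>w\<in>C. le w u \<and> le w v))"
  using wnt unfolding weak_normal_tree_def by (elim conjE)

lemma wn1: "cn_connected S F C \<Longrightarrow> u \<in> C \<Longrightarrow> v \<in> C \<Longrightarrow> u \<in> V \<Longrightarrow> v \<in> V \<Longrightarrow>
   \<not> le u v \<Longrightarrow> \<not> le v u \<Longrightarrow> \<exists>w\<in>C. le w u \<and> le w v"
  using wn1_all by blast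

lemma wn2_all: "\<forall>u v. le u v \<longrightarrow>
        (\<exists>C. cn_connected S F C \<and> u \<in> C \<and> v \<in> C \<and> C \<inter> tree_down_strict V E r u = {})"
  using wnt unfolding weak_normal_tree_def by (elim conjE)

lemma wn2: "le u v \<Longrightarrow> \<exists>C. cn_connected S F C \<and> u \<in> C \<and> v \<in> C \<and> C \<inter> tree_down_strict V E r u = {}"
  using wn2_all by blast

lemma CU: assumes "cn_connected S F C" "C \<inter> tree_down_strict V E r c = {}" "u \<in> C" "le c u"
  shows "C \<subseteq> Up c"
proof
  fix v assume vC: "v \<in> C"
  have CV: "C \<subseteq> V" using assms(1) VS unfolding cn_connected_def by simp
  have "le c v"
  proof (cases "le u v \<or> le v u")
    case True
    then show ?thesis
    proof
      assume "le u v" then show ?thesis using le_trans assms by blast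
    next
      assume "le v u"
      then have "le v c \<or> le c v" using chain assms by blast
      then show ?thesis using assms(2) vC tds_iff by blast
    qed
  next
    case False
    then obtain w where w: "w \<in> C" "le w u" "le w v" using wn1[OF assms(1) assms(3) vC] CV assms(3) vC by blast
    then have "le w c \<or> le c w" using chain assms by blast
    then show ?thesis using assms(2) w tds_iff le_trans by blast
  qed
  then show "v \<in> Up c" unfolding Up_def using le_V by blast
qed

end


context nt begin

lemma conn_sub: "cn_connected S F C \<Longrightarrow> C \<subseteq> S" unfolding cn_connected_def by blast

lemma conn_single: "s \<in> S \<Longrightarrow> cn_connected S F {s}"
  using cn unfolding cn_connected_def connectoid_def by blast

lemma connD: "cn_connected S F C \<Longrightarrow> x \<in> C \<Longrightarrow> y \<in> C \<Longrightarrow> \<exists>G\<in>F. G \<subseteq> C \<and> x \<in> G \<and> y \<in> G"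
  unfolding cn_connected_def by blast

lemma cn_un: "F1 \<in> F \<Longrightarrow> F2 \<in> F \<Longrightarrow> F1 \<inter> F2 \<noteq> {} \<Longrightarrow> F1 \<union> F2 \<in> F"
  using cn unfolding connectoid_def by blast

lemma conn_join: assumes "cn_connected S F C1" "cn_connected S F C2" "p \<in> C1" "p \<in> C2" "a \<in> C1" "b \<in> C2"
  shows "\<exists>G\<in>F. G \<subseteq> C1 \<union> C2 \<and> a \<in> G \<and> b \<in> G"
proof -
  obtain G1 where G1: "G1 \<in> F" "G1 \<subseteq> C1" "a \<in> G1" "p \<in> G1" using connD[OF assms(1) assms(5) assms(3)] by blast
  obtain G2 where G2: "G2 \<in> F" "G2 \<subseteq> C2" "p \<in> G2" "b \<in> G2" using connD[OF assms(2) assms(4) assms(6)] by blast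
  have "G1 \<union> G2 \<in> F" using cn_un[OF G1(1) G2(1)] G1 G2 by blast
  moreover have "G1 \<union> G2 \<subseteq> C1 \<union> C2" "a \<in> G1 \<union> G2" "b \<in> G1 \<union> G2" using G1 G2 by auto
  ultimately show ?thesis by blast
qed

lemma conn_union: assumes "cn_connected S F C1" "cn_connected S F C2" "C1 \<inter> C2 \<noteq> {}"
  shows "cn_connected S F (C1 \<union> C2)"
proof -
  obtain p where p: "p \<in> C1" "p \<in> C2" using assms(3) by blast
  have "\<exists>G\<in>F. G \<subseteq> C1 \<union> C2 \<and> x \<in> G \<and> y \<in> G" if xy: "x \<in> C1 \<union> C2" "y \<in> C1 \<union> C2" for x y
  proof -
    consider "x \<in> C1" "y \<in> C1" | "x \<in> C2" "y \<in> C2" | "x \<in> C1" "y \<in> C2" | "x \<in> C2" "y \<in> C1"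
      using xy by blast
    then show ?thesis
    proof cases
      case 1
      then obtain G where "G \<in> F" "G \<subseteq> C1" "x \<in> G" "y \<in> G" using connD[OF assms(1)] by blast
      then show ?thesis by (intro bexI[of _ G]) auto
    next
      case 2
      then obtain G where "G \<in> F" "G \<subseteq> C2" "x \<in> G" "y \<in> G" using connD[OF assms(2)] by blast
      then show ?thesis by (intro bexI[of _ G]) auto
    next
      case 3 show ?thesis by (rule conn_join[OF assms(1,2) p(1,2) 3])
    next
      case 4
      then have "\<exists>G\<in>F. G \<subseteq> C2 \<union> C1 \<and> x \<in> G \<and> y \<in> G" using conn_join[OF assms(2,1) p(2,1)] by blast
      then show ?thesis by (simp add: Un_commute)
    qed
  qed
  moreover have "C1 \<union> C2 \<subseteq> S" using assms conn_sub by blast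
  ultimately show ?thesis unfolding cn_connected_def by blast
qed

definition comp_of :: "'a set \<Rightarrow> 'a \<Rightarrow> 'a set" where
  "comp_of A p = \<Union>{C. cn_connected S F C \<and> C \<subseteq> A \<and> p \<in> C}"

lemma comp_of_sub: "cn_connected S F C \<Longrightarrow> C \<subseteq> A \<Longrightarrow> p \<in> C \<Longrightarrow> C \<subseteq> comp_of A p"
  unfolding comp_of_def by blast

lemma comp_of_conn: assumes "p \<in> A" "A \<subseteq> S" shows "cn_connected S F (comp_of A p)"
proof -
  have "\<exists>G\<in>F. G \<subseteq> comp_of A p \<and> x \<in> G \<and> y \<in> G" if xy: "x \<in> comp_of A p" "y \<in> comp_of A p" for x y
  proof -
    obtain C1 where C1: "cn_connected S F C1" "C1 \<subseteq> A" "p \<in> C1" "x \<in> C1"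
      using xy(1) unfolding comp_of_def by blast
    obtain C2 where C2: "cn_connected S F C2" "C2 \<subseteq> A" "p \<in> C2" "y \<in> C2"
      using xy(2) unfolding comp_of_def by blast
    have "cn_connected S F (C1 \<union> C2)" using conn_union C1 C2 by blast
    then obtain G where "G \<in> F" "G \<subseteq> C1 \<union> C2" "x \<in> G" "y \<in> G"
      using C1 C2 unfolding cn_connected_def by blast
    moreover have "C1 \<union> C2 \<subseteq> comp_of A p" using C1 C2 unfolding comp_of_def by blast
    ultimately show ?thesis by blast
  qed
  moreover have "comp_of A p \<subseteq> S" using assms unfolding comp_of_def by blast
  ultimately show ?thesis unfolding cn_connected_def by blast
qed

lemma comp_of_comp: assumes "p \<in> A" "A \<subseteq> S" shows "comp_of A p \<in> cn_components S F A"
proof -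
  have c: "cn_connected S F (comp_of A p)" using comp_of_conn assms by blast
  have p: "p \<in> comp_of A p" using comp_of_sub[OF conn_single, of p A p] assms by blast
  have "comp_of A p \<subseteq> A" unfolding comp_of_def by blast
  moreover have "K' = comp_of A p" if "comp_of A p \<subseteq> K'" "K' \<subseteq> A" "cn_connected S F K'" for K'
    using that p comp_of_sub[of K' A p] by blast
  ultimately show ?thesis unfolding cn_components_def using c by blast
qed

lemma comp_props: "K \<in> cn_components S F A \<Longrightarrow> cn_connected S F K \<and> K \<subseteq> A"
  unfolding cn_components_def by blast

lemma comp_absorb: assumes "K \<in> cn_components S F A" "cn_connected S F C" "C \<subseteq> A" "C \<inter> K \<noteq> {}"
  shows "C \<subseteq> K"
proof -
  have "cn_connected S F (K \<union> C)" using conn_union assms comp_props by (metis inf_commute)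
  moreover have "K \<union> C \<subseteq> A" using assms comp_props by blast
  ultimately have "K \<union> C = K" using assms(1) unfolding cn_components_def by blast
  then show ?thesis by blast
qed


lemma neck_H: assumes "necklace S F N"
  obtains H :: "nat \<Rightarrow> 'a set" where "\<And>n. finite (H n)" "\<And>n. cn_connected S F (H n)" "N = (\<Union>n. H n)"
    "\<And>i j. H i \<inter> H j \<noteq> {} \<longleftrightarrow> (i \<le> j + 1 \<and> j \<le> i + 1)"
proof -
  obtain H :: "nat \<Rightarrow> 'a set" where h: "(\<forall>n. finite (H n) \<and> cn_connected S F (H n))"
    "N = (\<Union>n. H n)" "(\<forall>i j. H i \<inter> H j \<noteq> {} \<longleftrightarrow> (i \<le> j + 1 \<and> j \<le> i + 1))"
    using assms unfolding necklace_def by auto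
  show ?thesis
  proof (rule that)
    show "\<And>n. finite (H n)" using h(1) by blast
    show "\<And>n. cn_connected S F (H n)" using h(1) by blast
    show "N = (\<Union>n. H n)" by (rule h(2))
    show "\<And>i j. H i \<inter> H j \<noteq> {} \<longleftrightarrow> (i \<le> j + 1 \<and> j \<le> i + 1)" using h(3) by blast
  qed
qed

lemma neck_conn: "necklace S F N \<Longrightarrow> cn_connected S F N" unfolding necklace_def by blast

lemma neck_sub: "necklace S F N \<Longrightarrow> N \<subseteq> S" using neck_conn conn_sub by blast

lemma neck_inf: assumes "necklace S F N" shows "infinite N"
proof -
  obtain H :: "nat \<Rightarrow> 'a set" where H: "\<And>n. finite (H n)" "\<And>n. cn_connected S F (H n)" "N = (\<Union>n. H n)"
    "\<And>i j. H i \<inter> H j \<noteq> {} \<longleftrightarrow> (i \<le> j + 1 \<and> j \<le> i + 1)" using neck_H[OF assms] by blast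
  have ne: "H i \<noteq> {}" for i using H(4)[of i i] by auto
  define f where "f i = (SOME x. x \<in> H (2*i))" for i
  have fH: "f i \<in> H (2*i)" for i unfolding f_def using ne[of "2*i"] by (meson ex_in_conv someI_ex)
  have "inj f"
  proof (rule injI)
    fix i j assume "f i = f j"
    then have "H (2*i) \<inter> H (2*j) \<noteq> {}" using fH[of i] fH[of j] by (metis IntI empty_iff)
    then have "2*i \<le> 2*j + 1 \<and> 2*j \<le> 2*i + 1" using H(4) by blast
    then show "i = j" by arith
  qed
  moreover have "range f \<subseteq> N" using fH H(3) by blast
  ultimately show ?thesis using infinite_iff_countable_subset by blast
qed

lemma seg_conn: assumes "\<And>n. cn_connected S F (H n)" "\<And>i. H i \<inter> H (Suc i) \<noteq> {}" "i \<le> j"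
  shows "cn_connected S F (\<Union>k\<in>{i..j}. H k)"
  using assms(3)
proof (induction j rule: dec_induct)
  case base then show ?case using assms(1) by simp
next
  case (step n)
  have eq: "(\<Union>k\<in>{i..Suc n}. H k) = (\<Union>k\<in>{i..n}. H k) \<union> H (Suc n)"
    using step.hyps(1) by (simp add: atLeastAtMostSuc_conv Un_commute)
  have "H n \<subseteq> (\<Union>k\<in>{i..n}. H k)" using step.hyps(1) by auto
  then have "(\<Union>k\<in>{i..n}. H k) \<inter> H (Suc n) \<noteq> {}" using assms(2)[of n] by blast
  then show ?case unfolding eq using conn_union step.IH assms(1) by blast
qed

lemma neck_tail: assumes N: "necklace S F N" and X: "finite X"
  shows "necklace_tail S F N X \<in> cn_components S F (N - X) \<and> finite (N - necklace_tail S F N X)"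
proof -
  obtain H :: "nat \<Rightarrow> 'a set" where H: "\<And>n. finite (H n)" "\<And>n. cn_connected S F (H n)" "N = (\<Union>n. H n)"
    "\<And>i j. H i \<inter> H j \<noteq> {} \<longleftrightarrow> (i \<le> j + 1 \<and> j \<le> i + 1)" using neck_H[OF N] by blast
  have ne: "H i \<noteq> {}" for i using H(4)[of i i] by auto
  have adj: "H i \<inter> H (Suc i) \<noteq> {}" for i using H(4)[of i "Suc i"] by simp
  have fin1: "finite {i. x \<in> H i}" for x
  proof (cases "\<exists>i0. x \<in> H i0")
    case True
    then obtain i0 where i0: "x \<in> H i0" by blast
    have "{i. x \<in> H i} \<subseteq> {..Suc i0}"
    proof
      fix i assume "i \<in> {i. x \<in> H i}"
      then have "H i \<inter> H i0 \<noteq> {}" using i0 by blast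
      then show "i \<in> {..Suc i0}" using H(4) by auto
    qed
    then show ?thesis using finite_subset by blast
  next
    case False then show ?thesis by simp
  qed
  have "{i. H i \<inter> X \<noteq> {}} = (\<Union>x\<in>X. {i. x \<in> H i})" by blast
  then have "finite {i. H i \<inter> X \<noteq> {}}" using fin1 X by simp
  then obtain n0 where n0: "\<forall>i\<in>{i. H i \<inter> X \<noteq> {}}. i < n0" using finite_nat_set_iff_bounded by blast
  have away: "i \<ge> n0 \<Longrightarrow> H i \<inter> X = {}" for i using n0 by force
  define T where "T = (\<Union>i\<in>{n0..}. H i)"
  have NS: "N \<subseteq> S" using neck_sub[OF N] .
  have HN: "H i \<subseteq> N" for i using H(3) by blast
  have TNX: "T \<subseteq> N - X" unfolding T_def using away HN by blast
  have Tconn: "cn_connected S F T"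
  proof -
    have "\<exists>G\<in>F. G \<subseteq> T \<and> x \<in> G \<and> y \<in> G" if xy: "x \<in> T" "y \<in> T" for x y
    proof -
      obtain i where i: "i \<ge> n0" "x \<in> H i" using xy(1) unfolding T_def by blast
      obtain j where j: "j \<ge> n0" "y \<in> H j" using xy(2) unfolding T_def by blast
      define seg where "seg = (\<Union>k\<in>{min i j..max i j}. H k)"
      have sc: "cn_connected S F seg" unfolding seg_def by (rule seg_conn[of H, OF H(2) adj]) simp
      have "x \<in> seg" "y \<in> seg" unfolding seg_def using i j by auto
      then obtain G where G: "G \<in> F" "G \<subseteq> seg" "x \<in> G" "y \<in> G" using connD[OF sc] by blast
      have "seg \<subseteq> T" unfolding seg_def T_def using i j by (auto intro!: bexI simp: min_def split: if_splits)
      then show ?thesis using G by (intro bexI[of _ G]) auto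
    qed
    moreover have "T \<subseteq> S" using TNX NS by blast
    ultimately show ?thesis unfolding cn_connected_def by blast
  qed
  obtain p where p: "p \<in> H n0" using ne by blast
  have pT: "p \<in> T" unfolding T_def using p by blast
  define K0 where "K0 = comp_of (N - X) p"
  have NXS: "N - X \<subseteq> S" using NS by blast
  have K0c: "K0 \<in> cn_components S F (N - X)" unfolding K0_def
    by (rule comp_of_comp) (use pT TNX NXS in auto)
  have TK0: "T \<subseteq> K0" unfolding K0_def by (rule comp_of_sub[OF Tconn TNX pT])
  have "N - K0 \<subseteq> (\<Union>i\<in>{..<n0}. H i)"
  proof
    fix x assume x: "x \<in> N - K0"
    then obtain i where i: "x \<in> H i" using H(3) by blast
    have "x \<notin> T" using x TK0 by blast
    then have "i < n0" using i unfolding T_def by (meson atLeast_iff not_le UN_I)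
    then show "x \<in> (\<Union>i\<in>{..<n0}. H i)" using i by blast
  qed
  moreover have "finite (\<Union>i\<in>{..<n0}. H i)" using H(1) by simp
  ultimately have finK0: "finite (N - K0)" using finite_subset by blast
  have infN: "infinite N" using neck_inf[OF N] .
  have "necklace_tail S F N X = K0"
    unfolding necklace_tail_def
  proof (rule the_equality)
    show "K0 \<in> cn_components S F (N - X) \<and> finite (N - K0)" using K0c finK0 by blast
  next
    fix K assume K: "K \<in> cn_components S F (N - X) \<and> finite (N - K)"
    have "K \<inter> K0 \<noteq> {}"
    proof
      assume "K \<inter> K0 = {}"
      then have "N \<subseteq> (N - K) \<union> (N - K0)" by blast
      then show False using K finK0 infN finite_subset by blast
    qed
    then have "K \<subseteq> K0" using comp_absorb[OF K0c] comp_props K by blast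
    moreover have "K0 \<subseteq> K" using comp_absorb[of K "N - X" K0] comp_props K0c K \<open>K \<inter> K0 \<noteq> {}\<close> by blast
    ultimately show "K = K0" by blast
  qed
  then show ?thesis using K0c finK0 by simp
qed

end


context nt begin

definition Dn :: "'a set \<Rightarrow> 'a set" where "Dn Y = {t\<in>V. finite (Y - Up t)}"

definition rray :: "(nat \<Rightarrow> 'a) \<Rightarrow> bool" where "rray Q \<longleftrightarrow> is_ray V E Q \<and> Q 0 = r"

lemma Up_iff: "x \<in> Up t \<longleftrightarrow> le t x" unfolding Up_def using le_V by blast

lemma P_r: "P r = [r]"
proof -
  have "gpath V E [r]" unfolding gpath_def using rV by simp
  moreover have "hd [r] = r" "last [r] = r" by simp_all
  ultimately show ?thesis by (rule P_uniq)
qed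

lemma Dn_V: "Dn Y \<subseteq> V" unfolding Dn_def by blast
lemma Dn_fin: "t \<in> Dn Y \<Longrightarrow> finite (Y - Up t)" unfolding Dn_def by blast
lemma Dn_I: "t \<in> V \<Longrightarrow> finite (Y - Up t) \<Longrightarrow> t \<in> Dn Y" unfolding Dn_def by blast

lemma Dn_r: "Y \<subseteq> V \<Longrightarrow> r \<in> Dn Y"
proof -
  assume "Y \<subseteq> V"
  then have "Y - Up r = {}" unfolding Up_def using le_r by blast
  then have "finite (Y - Up r)" by (metis finite.emptyI)
  then show "r \<in> Dn Y" using Dn_I rV by blast
qed

lemma fin_inter_ne: "infinite Y \<Longrightarrow> finite (Y - A) \<Longrightarrow> finite (Y - B) \<Longrightarrow> \<exists>x. x \<in> Y \<and> x \<in> A \<and> x \<in> B"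
proof (rule ccontr)
  assume a: "infinite Y" "finite (Y - A)" "finite (Y - B)" "\<not> (\<exists>x. x \<in> Y \<and> x \<in> A \<and> x \<in> B)"
  then have "Y \<subseteq> (Y - A) \<union> (Y - B)" by blast
  then show False using a finite_subset by blast
qed

lemma Dn_chain: assumes "infinite Y" "t \<in> Dn Y" "t' \<in> Dn Y" shows "le t t' \<or> le t' t"
proof -
  obtain x where "x \<in> Up t" "x \<in> Up t'"
    using fin_inter_ne[OF assms(1) Dn_fin[OF assms(2)] Dn_fin[OF assms(3)]] by blast
  then have "le t x" "le t' x" unfolding Up_iff by auto
  then show ?thesis using chain by blast
qed

lemma rray_P: assumes "rray Q" shows "P (Q n) = map Q [0..<Suc n]"
proof (induction n)
  case 0 then show ?case using assms P_r unfolding rray_def by simp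
next
  case (Suc n)
  have ray: "inj Q" "\<And>n. Q n \<in> V" "\<And>n. (Q n, Q (Suc n)) \<in> E" using assms unfolding rray_def is_ray_def by auto
  from edge[OF ray(3)[of n]] show ?case
  proof
    assume "P (Q (Suc n)) = P (Q n) @ [Q (Suc n)]"
    then show ?thesis using Suc.IH by simp
  next
    assume a: "P (Q n) = P (Q (Suc n)) @ [Q n]"
    have "Q (Suc n) \<in> set (P (Q (Suc n)))" using P_last ray(2) by blast
    then have "Q (Suc n) \<in> set (P (Q n))" using a by simp
    then have "Q (Suc n) \<in> Q ` {0..<Suc n}" unfolding Suc.IH by (simp only: set_map set_upt)
    then obtain k where k: "k < Suc n" "Q (Suc n) = Q k" by auto
    then have "Suc n = k" using ray(1) by (simp add: inj_eq)
    then show ?thesis using k by simp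
  qed
qed

lemma rray_V: "rray Q \<Longrightarrow> Q n \<in> V" unfolding rray_def is_ray_def by blast

lemma rray_depth: "rray Q \<Longrightarrow> depth (Q n) = Suc n"
  unfolding depth_def using rray_P by simp

lemma rray_le: assumes "rray Q" shows "le (Q i) (Q j) \<longleftrightarrow> i \<le> j"
proof
  assume "le (Q i) (Q j)"
  then have "Q i \<in> set (P (Q j))" by (rule le_D)
  then have "Q i \<in> Q ` {0..<Suc j}" unfolding rray_P[OF assms] by (simp only: set_map set_upt)
  then obtain k where k: "k < Suc j" "Q i = Q k" by auto
  moreover have "inj Q" using assms unfolding rray_def is_ray_def by blast
  ultimately have "i = k" by (simp add: inj_eq)
  then show "i \<le> j" using k by simp
next
  assume "i \<le> j"
  then have "Q i \<in> Q ` {0..<Suc j}" by auto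
  then have "Q i \<in> set (P (Q j))" unfolding rray_P[OF assms] by (simp only: set_map set_upt)
  then show "le (Q i) (Q j)" using le_I rray_V[OF assms] by blast
qed

lemma rray_eq: assumes "rray Q" "rray Q'" "range Q' \<subseteq> range Q" shows "Q' = Q"
proof
  fix j
  obtain k where k: "Q' j = Q k" using assms(3) by blast
  have "Suc j = Suc k" using rray_depth[OF assms(2), of j] rray_depth[OF assms(1), of k] k by simp
  then show "Q' j = Q j" using k by simp
qed

lemma Dn_rray: assumes inf: "infinite Y" and YV: "Y \<subseteq> V"
  and ch: "\<And>t. t \<in> Dn Y \<Longrightarrow> \<exists>c. c \<in> Dn Y \<and> P c = P t @ [c]"
  shows "\<exists>Q. rray Q \<and> Dn Y = range Q"
proof -
  define nx where "nx q = (SOME c. c \<in> Dn Y \<and> P c = P q @ [c])" for q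
  have nx: "nx q \<in> Dn Y \<and> P (nx q) = P q @ [nx q]" if qD: "q \<in> Dn Y" for q
  proof -
    obtain c where "c \<in> Dn Y \<and> P c = P q @ [c]" using ch[OF qD] by blast
    then show ?thesis unfolding nx_def by (rule someI)
  qed
  define Q where "Q n = (nx ^^ n) r" for n
  have Q0: "Q 0 = r" unfolding Q_def by simp
  have QS: "Q (Suc n) = nx (Q n)" for n unfolding Q_def by simp
  have QD: "Q n \<in> Dn Y" for n
  proof (induction n)
    case 0 then show ?case unfolding Q0 using Dn_r[OF YV] .
  next
    case (Suc n) then show ?case unfolding QS using nx by blast
  qed
  have QP: "P (Q (Suc n)) = P (Q n) @ [Q (Suc n)]" for n
    unfolding QS using nx[OF QD[of n]] by blast
  have QV: "Q n \<in> V" for n using QD[of n] Dn_V by blast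
  have QE: "(Q n, Q (Suc n)) \<in> E" for n using child_props(3)[OF QP QV QV] .
  have Qd: "depth (Q n) = Suc n" for n
  proof (induction n)
    case 0
    have "depth r = 1" unfolding depth_def P_r by simp
    then show ?case unfolding Q0 by simp
  next
    case (Suc n)
    have "depth (Q (Suc n)) = Suc (depth (Q n))" using child_props(2)[OF QP QV QV] .
    then show ?case using Suc.IH by simp
  qed
  have "inj Q"
  proof (rule injI)
    fix i j assume "Q i = Q j"
    then have "depth (Q i) = depth (Q j)" by simp
    then show "i = j" unfolding Qd by simp
  qed
  then have rQ: "rray Q" unfolding rray_def is_ray_def using QV QE Q0 by blast
  have "Dn Y \<subseteq> range Q"
  proof
    fix t assume t: "t \<in> Dn Y"
    then have tV: "t \<in> V" using Dn_V by blast
    have "depth t \<noteq> 0" using depth_pos[OF tV] by simp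
    then obtain d where d: "depth t = Suc d" using not0_implies_Suc by blast
    have "le t (Q d) \<or> le (Q d) t" using Dn_chain[OF inf t QD] .
    then have "t = Q d"
    proof
      assume a: "le t (Q d)"
      have "depth t = depth (Q d)" using d Qd by simp
      then show ?thesis using depth_eq[OF a] by blast
    next
      assume a: "le (Q d) t"
      have "depth (Q d) = depth t" using d Qd by simp
      then show ?thesis using depth_eq[OF a] by blast
    qed
    then show "t \<in> range Q" by simp
  qed
  moreover have "range Q \<subseteq> Dn Y" using QD by blast
  ultimately show ?thesis using rQ by blast
qed

lemma neck_child: assumes N: "necklace S F N" and t: "t \<in> Dn N"
  shows "\<exists>c. c \<in> Dn N \<and> P c = P t @ [c]"
proof -
  have tV: "t \<in> V" using t Dn_V by blast
  define X where "X = set (P t)"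
  have finX: "finite X" unfolding X_def by simp
  define K where "K = necklace_tail S F N X"
  have K: "K \<in> cn_components S F (N - X)" "finite (N - K)" using neck_tail[OF N finX] unfolding K_def by auto
  have Kc: "cn_connected S F K" and KNX: "K \<subseteq> N - X" using comp_props[OF K(1)] by auto
  have infN: "infinite N" using neck_inf[OF N] .
  obtain u where u: "u \<in> N" "u \<in> K" "u \<in> Up t"
    using fin_inter_ne[OF infN K(2) Dn_fin[OF t]] by blast
  have "u \<notin> X" using u KNX by blast
  then have "u \<noteq> t" using P_last[OF tV] unfolding X_def by blast
  moreover have "le t u" using u Up_iff by blast
  ultimately obtain c where c: "c \<in> V" "P c = P t @ [c]" "le c u" using child by blast
  have "tree_down_strict V E r c = X" unfolding X_def using child_props(4)[OF c(2) c(1) tV] .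
  then have "K \<inter> tree_down_strict V E r c = {}" using KNX by blast
  then have "K \<subseteq> Up c" using CU[OF Kc _ u(2) c(3)] by blast
  then have "N - Up c \<subseteq> N - K" by blast
  then have "finite (N - Up c)" using K(2) finite_subset by blast
  then have "c \<in> Dn N" using Dn_I c by blast
  then show ?thesis using c by blast
qed

lemma neck_Dn: assumes N: "necklace S F N" shows "\<exists>Q. rray Q \<and> Dn N = range Q"
proof (rule Dn_rray)
  show "infinite N" using neck_inf[OF N] .
  show "N \<subseteq> V" using neck_sub[OF N] VS by simp
  show "\<And>t. t \<in> Dn N \<Longrightarrow> \<exists>c. c \<in> Dn N \<and> P c = P t @ [c]" using neck_child[OF N] by blast
qed

lemma ray_inf: "is_ray V E R \<Longrightarrow> infinite (range R)"
  unfolding is_ray_def using infinite_iff_countable_subset by blast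

lemma ray_V: "is_ray V E R \<Longrightarrow> R n \<in> V" unfolding is_ray_def by blast
lemma ray_E: "is_ray V E R \<Longrightarrow> (R n, R (Suc n)) \<in> E" unfolding is_ray_def by blast

lemma ray_eventually: assumes R: "is_ray V E R" and fin: "finite (range R - A)"
  shows "\<exists>m. \<forall>k\<ge>m. R k \<in> A"
proof -
  have "inj R" using R unfolding is_ray_def by blast
  then have "finite (R -` (range R - A))" using fin finite_vimageI by blast
  moreover have "R -` (range R - A) = {k. R k \<notin> A}" by auto
  ultimately have "finite {k. R k \<notin> A}" by simp
  then obtain m where "\<forall>k\<in>{k. R k \<notin> A}. k < m" using finite_nat_set_iff_bounded by blast
  then show ?thesis by (metis mem_Collect_eq not_le)
qed

lemma ray_child: assumes R: "is_ray V E R" and t: "t \<in> Dn (range R)"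
  shows "\<exists>c. c \<in> Dn (range R) \<and> P c = P t @ [c]"
proof -
  have tV: "t \<in> V" using t Dn_V by blast
  define X where "X = set (P t)"
  have "finite (range R - (Up t - X))"
  proof -
    have "range R - (Up t - X) \<subseteq> (range R - Up t) \<union> X" by blast
    moreover have "finite (range R - Up t)" using Dn_fin[OF t] .
    ultimately show ?thesis unfolding X_def using finite_subset by blast
  qed
  then obtain m where m: "\<And>k. k \<ge> m \<Longrightarrow> R k \<in> Up t - X" using ray_eventually[OF R] by blast
  have "R m \<noteq> t" using m[of m] P_last[OF tV] unfolding X_def by blast
  moreover have "le t (R m)" using m[of m] Up_iff by blast
  ultimately obtain c where c: "c \<in> V" "P c = P t @ [c]" "le c (R m)" using child by blast
  have tds: "tree_down_strict V E r c = X" unfolding X_def using child_props(4)[OF c(2) c(1) tV] .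
  have up: "le c (R (m + d))" for d
  proof (induction d)
    case 0 then show ?case using c by simp
  next
    case (Suc d)
    have "R (Suc (m + d)) \<notin> X" using m[of "Suc (m + d)"] by simp
    then show ?case using EU[OF Suc.IH ray_E[OF R]] tds by simp
  qed
  have "range R - Up c \<subseteq> R ` {..<m}"
  proof
    fix x assume x: "x \<in> range R - Up c"
    then obtain k where k: "x = R k" by blast
    have "\<not> m \<le> k"
    proof
      assume "m \<le> k"
      then have "le c (R k)" using up[of "k - m"] by simp
      then have "R k \<in> Up c" unfolding Up_iff .
      then show False using x k by simp
    qed
    then show "x \<in> R ` {..<m}" using k by simp
  qed
  then have "finite (range R - Up c)" using finite_subset by blast
  then have "c \<in> Dn (range R)" using Dn_I c by blast
  then show ?thesis using c by blast
qed

lemma ray_Dn: assumes R: "is_ray V E R" shows "\<exists>Q. rray Q \<and> Dn (range R) = range Q"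
proof (rule Dn_rray)
  show "infinite (range R)" using ray_inf[OF R] .
  show "range R \<subseteq> V" using ray_V[OF R] by blast
  show "\<And>t. t \<in> Dn (range R) \<Longrightarrow> \<exists>c. c \<in> Dn (range R) \<and> P c = P t @ [c]" using ray_child[OF R] by blast
qed

end


context nt begin

lemma Up_V: "Up c \<subseteq> V" unfolding Up_def by blast

lemma Up_avoid: assumes Q: "rray Q" and X: "finite X" shows "\<exists>n. Up (Q n) \<inter> X = {}"
proof -
  define n0 where "n0 = Max (insert 0 (depth ` X))"
  have "x \<notin> Up (Q n0)" if x: "x \<in> X" for x
  proof
    assume "x \<in> Up (Q n0)"
    then have "le (Q n0) x" unfolding Up_iff .
    then have "depth (Q n0) \<le> depth x" by (rule depth_mono)
    moreover have "depth x \<le> n0" unfolding n0_def using X x by simp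
    ultimately show False using rray_depth[OF Q, of n0] by simp
  qed
  then show ?thesis by blast
qed

lemma disjoint_up: assumes "depth c = depth c'" "c \<noteq> c'" shows "Up c \<inter> Up c' = {}"
proof (rule ccontr)
  assume "Up c \<inter> Up c' \<noteq> {}"
  then obtain x where "x \<in> Up c" "x \<in> Up c'" by blast
  then have "le c x" "le c' x" unfolding Up_iff by auto
  then have "le c c' \<or> le c' c" using chain by blast
  then show False
  proof
    assume a: "le c c'" then show False using depth_eq[OF a] assms by blast
  next
    assume a: "le c' c" then show False using depth_eq[OF a] assms by metis
  qed
qed

lemma diverge: assumes Q: "rray Q" and Q': "rray Q'" and ne: "Q \<noteq> Q'"
  shows "\<exists>c c'. c \<in> range Q \<and> c' \<in> range Q' \<and> Up c \<inter> Up c' = {} \<and>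
     tree_down_strict V E r c = tree_down_strict V E r c' \<and> finite (tree_down_strict V E r c)"
proof -
  have "\<exists>j. Q j \<noteq> Q' j"
  proof (rule ccontr)
    assume "\<not> (\<exists>j. Q j \<noteq> Q' j)"
    then have "Q = Q'" by (intro ext) simp
    then show False using ne by simp
  qed
  define j where "j = (LEAST j. Q j \<noteq> Q' j)"
  have j1: "Q j \<noteq> Q' j" unfolding j_def using LeastI_ex[OF \<open>\<exists>j. Q j \<noteq> Q' j\<close>] .
  have j2: "Q i = Q' i" if "i < j" for i using not_less_Least[of i "\<lambda>j. Q j \<noteq> Q' j"] that unfolding j_def by blast
  note j = j1 j2
  have "j \<noteq> 0"
  proof
    assume "j = 0"
    then have "Q 0 \<noteq> Q' 0" using j1 by simp
    moreover have "Q 0 = r" "Q' 0 = r" using Q Q' unfolding rray_def by auto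
    ultimately show False by simp
  qed
  then obtain i where i: "j = Suc i" using not0_implies_Suc by blast
  have eqi: "Q i = Q' i" using j(2) i by simp
  have PQ: "P (Q j) = P (Q i) @ [Q j]" using rray_P[OF Q, of j] rray_P[OF Q, of i] i by simp
  have PQ': "P (Q' j) = P (Q' i) @ [Q' j]" using rray_P[OF Q', of j] rray_P[OF Q', of i] i by simp
  have t1: "tree_down_strict V E r (Q j) = set (P (Q i))"
    using child_props(4)[OF PQ rray_V[OF Q] rray_V[OF Q]] .
  have t2: "tree_down_strict V E r (Q' j) = set (P (Q i))"
    using child_props(4)[OF PQ' rray_V[OF Q'] rray_V[OF Q']] eqi by simp
  have "depth (Q j) = depth (Q' j)" using rray_depth[OF Q] rray_depth[OF Q'] by simp
  then have "Up (Q j) \<inter> Up (Q' j) = {}" using disjoint_up j(1) by blast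
  then show ?thesis using t1 t2 by (intro exI[of _ "Q j"] exI[of _ "Q' j"]) auto
qed

lemma rray_Dn: assumes Q: "rray Q" shows "Dn (range Q) = range Q"
proof
  show "range Q \<subseteq> Dn (range Q)"
  proof
    fix x assume "x \<in> range Q"
    then obtain j where x: "x = Q j" by blast
    have "range Q - Up (Q j) \<subseteq> Q ` {..<j}"
    proof
      fix y assume y: "y \<in> range Q - Up (Q j)"
      then obtain i where yi: "y = Q i" by blast
      have "\<not> j \<le> i"
      proof
        assume "j \<le> i"
        then have "le (Q j) (Q i)" using rray_le[OF Q] by blast
        then have "Q i \<in> Up (Q j)" unfolding Up_iff .
        then show False using y yi by simp
      qed
      then show "y \<in> Q ` {..<j}" using yi by simp
    qed
    then have "finite (range Q - Up (Q j))" using finite_subset by blast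
    then show "x \<in> Dn (range Q)" using Dn_I rray_V[OF Q] x by blast
  qed
next
  show "Dn (range Q) \<subseteq> range Q"
  proof
    fix t assume t: "t \<in> Dn (range Q)"
    have "is_ray V E Q" using Q unfolding rray_def by blast
    then have "infinite (range Q)" by (rule ray_inf)
    moreover have "finite (range Q - Up t)" using Dn_fin[OF t] .
    moreover have "finite (range Q - UNIV)" by simp
    ultimately obtain x where "x \<in> range Q" "x \<in> Up t" using fin_inter_ne by blast
    then obtain i where "le t (Q i)" unfolding Up_iff by blast
    then have "t \<in> set (P (Q i))" by (rule le_D)
    then have "t \<in> Q ` {0..<Suc i}" unfolding rray_P[OF Q] by (simp only: set_map set_upt)
    then show "t \<in> range Q" by blast
  qed
qed

lemma normal_ray: "is_ray V E R \<Longrightarrow> R 0 = r \<Longrightarrow> \<exists>N. necklace S F N \<and> finite {n. R n \<notin> N}"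
  using nst unfolding normal_spanning_tree_def normal_tree_def by blast

lemma neck_surj: assumes Q: "rray Q" shows "\<exists>N. necklace S F N \<and> Dn N = range Q"
proof -
  obtain N where N: "necklace S F N" "finite {n. Q n \<notin> N}"
    using normal_ray Q unfolding rray_def by blast
  obtain Q' where Q': "rray Q'" "Dn N = range Q'" using neck_Dn[OF N(1)] by blast
  have injQ: "inj Q" using Q unfolding rray_def is_ray_def by blast
  have "range Q' \<subseteq> range Q"
  proof
    fix x assume "x \<in> range Q'"
    then obtain j where x: "x = Q' j" by blast
    have "Q' j \<in> Dn N" using Q'(2) by simp
    then have fin: "finite (N - Up (Q' j))" by (rule Dn_fin)
    have "finite (Q -` (N - Up (Q' j)))" using fin injQ finite_vimageI by blast
    then have "finite ({n. Q n \<notin> N} \<union> Q -` (N - Up (Q' j)))" using N(2) by simp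
    then obtain i where "i \<notin> {n. Q n \<notin> N} \<union> Q -` (N - Up (Q' j))"
      using infinite_UNIV_nat by (metis ex_new_if_finite)
    then have "Q i \<in> Up (Q' j)" by simp
    then have "le (Q' j) (Q i)" unfolding Up_iff .
    then have "Q' j \<in> set (P (Q i))" by (rule le_D)
    then have "Q' j \<in> Q ` {0..<Suc i}" unfolding rray_P[OF Q] by (simp only: set_map set_upt)
    then show "x \<in> range Q" using x by blast
  qed
  then have "Q' = Q" using rray_eq[OF Q Q'(1)] by blast
  then show ?thesis using N(1) Q'(2) by blast
qed

lemma tail_in_comp: assumes N: "necklace S F N" and X: "finite X" "X \<subseteq> S"
  and c: "c \<in> Dn N" and cX: "Up c \<inter> X = {}"
  shows "necklace_tail S F N X \<subseteq> comp_of (S - X) c"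
proof -
  define T where "T = necklace_tail S F N X"
  have T: "T \<in> cn_components S F (N - X)" "finite (N - T)" using neck_tail[OF N X(1)] unfolding T_def by auto
  have Tc: "cn_connected S F T" and TNX: "T \<subseteq> N - X" using comp_props[OF T(1)] by auto
  have cV: "c \<in> V" using c Dn_V by blast
  obtain u where u: "u \<in> N" "u \<in> T" "u \<in> Up c"
    using fin_inter_ne[OF neck_inf[OF N] T(2) Dn_fin[OF c]] by blast
  have "le c u" using u(3) unfolding Up_iff .
  then obtain C where C: "cn_connected S F C" "c \<in> C" "u \<in> C" "C \<inter> tree_down_strict V E r c = {}"
    using wn2 by blast
  have "C \<subseteq> Up c" using CU[OF C(1) C(4) C(2)] le_refl[OF cV] by blast
  then have CSX: "C \<subseteq> S - X" using cX Up_V VS by blast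
  have NS: "N \<subseteq> S" using neck_sub[OF N] .
  have "T \<inter> C \<noteq> {}" using u C by blast
  then have "cn_connected S F (T \<union> C)" using conn_union[OF Tc C(1)] by blast
  moreover have "T \<union> C \<subseteq> S - X" using CSX TNX NS by blast
  moreover have "c \<in> T \<union> C" using C by blast
  ultimately have "T \<union> C \<subseteq> comp_of (S - X) c" by (rule comp_of_sub)
  then show ?thesis unfolding T_def by blast
qed

lemma neck_equiv_iff: assumes N: "necklace S F N" and N': "necklace S F N'"
  shows "necklace_equiv S F N N' \<longleftrightarrow> Dn N = Dn N'"
proof
  assume eqv: "necklace_equiv S F N N'"
  obtain Q where Q: "rray Q" "Dn N = range Q" using neck_Dn[OF N] by blast
  obtain Q' where Q': "rray Q'" "Dn N' = range Q'" using neck_Dn[OF N'] by blast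
  show "Dn N = Dn N'"
  proof (cases "Q = Q'")
    case True then show ?thesis using Q Q' by simp
  next
    case False
    then obtain c c' where cc: "c \<in> range Q" "c' \<in> range Q'" "Up c \<inter> Up c' = {}"
      "tree_down_strict V E r c = tree_down_strict V E r c'" "finite (tree_down_strict V E r c)"
      using diverge[OF Q(1) Q'(1)] by blast
    define X where "X = tree_down_strict V E r c"
    have XS: "X \<subseteq> S" unfolding X_def tree_down_strict_def tree_down_def using VS by blast
    have finX: "finite X" using cc unfolding X_def by simp
    obtain K where K: "K \<in> cn_components S F (S - X)" "necklace_tail S F N X \<subseteq> K"
       "necklace_tail S F N' X \<subseteq> K"
      using eqv[unfolded necklace_equiv_def, rule_format, of X] finX XS by blast
    have T: "necklace_tail S F N X \<in> cn_components S F (N - X)" "finite (N - necklace_tail S F N X)"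
      using neck_tail[OF N finX] by auto
    have T': "necklace_tail S F N' X \<in> cn_components S F (N' - X)" "finite (N' - necklace_tail S F N' X)"
      using neck_tail[OF N' finX] by auto
    have cD: "c \<in> Dn N" using cc Q by simp
    have cD': "c' \<in> Dn N'" using cc Q' by simp
    obtain u where u: "u \<in> N" "u \<in> necklace_tail S F N X" "u \<in> Up c"
      using fin_inter_ne[OF neck_inf[OF N] T(2) Dn_fin[OF cD]] by blast
    obtain v where v: "v \<in> N'" "v \<in> necklace_tail S F N' X" "v \<in> Up c'"
      using fin_inter_ne[OF neck_inf[OF N'] T'(2) Dn_fin[OF cD']] by blast
    have Kc: "cn_connected S F K" and KSX: "K \<subseteq> S - X" using comp_props[OF K(1)] by auto
    have "K \<inter> tree_down_strict V E r c = {}" using KSX unfolding X_def by blast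
    moreover have "u \<in> K" using u K by blast
    moreover have "le c u" using u unfolding Up_iff by blast
    ultimately have "K \<subseteq> Up c" using CU[OF Kc] by blast
    moreover have "v \<in> K" using v K by blast
    ultimately have "v \<in> Up c \<inter> Up c'" using v by blast
    then show ?thesis using cc by blast
  qed
next
  assume eq: "Dn N = Dn N'"
  obtain Q where Q: "rray Q" "Dn N = range Q" using neck_Dn[OF N] by blast
  show "necklace_equiv S F N N'" unfolding necklace_equiv_def
  proof (intro allI impI)
    fix X assume X: "finite X \<and> X \<subseteq> S"
    obtain n where n: "Up (Q n) \<inter> X = {}" using Up_avoid[OF Q(1)] X by blast
    have cD: "Q n \<in> Dn N" "Q n \<in> Dn N'" using Q eq by auto
    have QV: "Q n \<in> V" using rray_V[OF Q(1)] .
    have "Q n \<in> Up (Q n)" unfolding Up_iff using le_refl[OF QV] .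
    then have "Q n \<notin> X" using n by blast
    then have "Q n \<in> S - X" using QV VS by blast
    then have K: "comp_of (S - X) (Q n) \<in> cn_components S F (S - X)" by (intro comp_of_comp) auto
    have X1: "finite X" and X2: "X \<subseteq> S" using X by auto
    have "necklace_tail S F N X \<subseteq> comp_of (S - X) (Q n)" by (rule tail_in_comp[OF N X1 X2 cD(1) n])
    moreover have "necklace_tail S F N' X \<subseteq> comp_of (S - X) (Q n)" by (rule tail_in_comp[OF N' X1 X2 cD(2) n])
    ultimately show "\<exists>K\<in>cn_components S F (S - X). necklace_tail S F N X \<subseteq> K \<and> necklace_tail S F N' X \<subseteq> K"
      using K by blast
  qed
qed

end


context nt begin

definition rel :: "'a set \<Rightarrow> 'a \<Rightarrow> 'a \<Rightarrow> bool" where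
  "rel W a b \<longleftrightarrow> (a,b) \<in> E \<and> a \<in> W \<and> b \<in> W"

lemma walk_path: assumes "(rel W)\<^sup>*\<^sup>* a b" "a \<in> W"
  shows "\<exists>xs. gpath W (E \<inter> W \<times> W) xs \<and> hd xs = a \<and> last xs = b"
  using assms(1)
proof (induction rule: rtranclp_induct)
  case base
  have "gpath W (E \<inter> W \<times> W) [a]" unfolding gpath_def using assms(2) by simp
  then show ?case by (intro exI[of _ "[a]"]) simp
next
  case (step y z)
  obtain xs where xs: "gpath W (E \<inter> W \<times> W) xs" "hd xs = a" "last xs = y" using step.IH by blast
  have yz: "(y,z) \<in> E" "y \<in> W" "z \<in> W" using step.hyps(2) unfolding rel_def by auto
  show ?case
  proof (cases "z \<in> set xs")
    case True
    then obtain p q where pq: "xs = p @ z # q" by (meson split_list)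
    have g: "gpath W (E \<inter> W \<times> W) (p @ [z])"
      using gpath_prefix[of W "E \<inter> W \<times> W" "p @ [z]" q] xs(1) pq by simp
    have "hd (p @ [z]) = a" using xs(2) pq by (cases p) auto
    then show ?thesis using g by (intro exI[of _ "p @ [z]"]) simp
  next
    case False
    have s: "successively (\<lambda>x y. (x,y) \<in> E \<inter> W \<times> W) xs" and ne: "xs \<noteq> []"
      and d: "distinct xs" and sW: "set xs \<subseteq> W" using xs(1) unfolding gpath_succ by auto
    have "successively (\<lambda>x y. (x,y) \<in> E \<inter> W \<times> W) (xs @ [z])"
      using s ne xs(3) yz by (simp add: successively_append_iff)
    then have g: "gpath W (E \<inter> W \<times> W) (xs @ [z])"
      unfolding gpath_succ using d sW False yz by simp
    have "hd (xs @ [z]) = a" using xs(2) ne by simp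
    then show ?thesis using g by (intro exI[of _ "xs @ [z]"]) simp
  qed
qed

lemma rel_sym: "rel W a b \<Longrightarrow> rel W b a" unfolding rel_def using symE by blast

lemma reach_sym: "(rel W)\<^sup>*\<^sup>* a b \<Longrightarrow> (rel W)\<^sup>*\<^sup>* b a"
proof (induction rule: rtranclp_induct)
  case base then show ?case by simp
next
  case (step y z)
  show ?case using converse_rtranclp_into_rtranclp[OF rel_sym[OF step.hyps(2)] step.IH] .
qed

lemma reach_up: "le c x \<Longrightarrow> (rel (Up c))\<^sup>*\<^sup>* c x"
proof (induction "depth x" arbitrary: x rule: less_induct)
  case less
  show ?case
  proof (cases "x = c")
    case True then show ?thesis by simp
  next
    case False
    have xV: "x \<in> V" using less.prems le_V by blast
    have cx: "c \<in> set (P x)" using less.prems by (rule le_D)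
    have "x \<noteq> r"
    proof
      assume "x = r"
      then have "c = r" using cx P_r by simp
      then show False using False \<open>x = r\<close> by simp
    qed
    then obtain p where p: "p \<in> V" "P x = P p @ [x]" using parent[OF xV] by blast
    have "c \<in> set (P p)" using cx p(2) False by simp
    then have cp: "le c p" using le_I p(1) by blast
    have "depth x = Suc (depth p)" using child_props(2)[OF p(2) xV p(1)] .
    then have "(rel (Up c))\<^sup>*\<^sup>* c p" using less.hyps[OF _ cp] by simp
    moreover have "rel (Up c) p x"
      unfolding rel_def Up_iff using child_props(3)[OF p(2) xV p(1)] cp less.prems by blast
    ultimately show ?thesis by (rule rtranclp.rtrancl_into_rtrancl)
  qed
qed

lemma path_up: "successively (\<lambda>x y. (x,y) \<in> E) xs \<Longrightarrow> set xs \<inter> tree_down_strict V E r c = {} \<Longrightarrow>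
  xs \<noteq> [] \<Longrightarrow> le c (hd xs) \<Longrightarrow> \<forall>x\<in>set xs. le c x"
proof (induction xs)
  case Nil then show ?case by simp
next
  case (Cons a xs)
  show ?case
  proof (cases "xs = []")
    case True then show ?thesis using Cons.prems by simp
  next
    case False
    have e: "(a, hd xs) \<in> E" and s: "successively (\<lambda>x y. (x,y) \<in> E) xs"
      using Cons.prems(1) False by (auto simp: successively_Cons)
    have "hd xs \<notin> tree_down_strict V E r c" using Cons.prems(2) False hd_in_set by fastforce
    then have "le c (hd xs)" using EU[OF _ e] Cons.prems(4) by simp
    then have "\<forall>x\<in>set xs. le c x" using Cons.IH[OF s _ False] Cons.prems(2) by auto
    then show ?thesis using Cons.prems(4) by simp
  qed
qed

lemma ray_back: assumes R: "is_ray V E R" and m: "\<And>k. k \<ge> m \<Longrightarrow> R k \<notin> tree_down_strict V E r c"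
  shows "le c (R (i + d)) \<Longrightarrow> m \<le> i \<Longrightarrow> le c (R i)"
proof (induction d arbitrary: i)
  case 0 then show ?case by simp
next
  case (Suc d)
  have "le c (R (Suc i + d))" using Suc.prems(1) by simp
  then have "le c (R (Suc i))" using Suc.IH Suc.prems(2) by simp
  moreover have "(R (Suc i), R i) \<in> E" using symE[OF ray_E[OF R]] .
  moreover have "R i \<notin> tree_down_strict V E r c" using m Suc.prems(2) .
  ultimately show ?case by (rule EU)
qed

lemma ray_equiv_iff: assumes R: "is_ray V E R" and R': "is_ray V E R'"
  shows "ray_equiv V E R R' \<longleftrightarrow> Dn (range R) = Dn (range R')"
proof
  assume eqv: "ray_equiv V E R R'"
  obtain Q where Q: "rray Q" "Dn (range R) = range Q" using ray_Dn[OF R] by blast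
  obtain Q' where Q': "rray Q'" "Dn (range R') = range Q'" using ray_Dn[OF R'] by blast
  show "Dn (range R) = Dn (range R')"
  proof (cases "Q = Q'")
    case True then show ?thesis using Q Q' by simp
  next
    case False
    then obtain c c' where cc: "c \<in> range Q" "c' \<in> range Q'" "Up c \<inter> Up c' = {}"
      "tree_down_strict V E r c = tree_down_strict V E r c'" "finite (tree_down_strict V E r c)"
      using diverge[OF Q(1) Q'(1)] by blast
    define X where "X = tree_down_strict V E r c"
    have finX: "finite X" using cc unfolding X_def by simp
    obtain m n xs where mn: "\<forall>k\<ge>m. R k \<notin> X" "\<forall>k\<ge>n. R' k \<notin> X"
      "gpath (V - X) (E \<inter> ((V - X) \<times> (V - X))) xs" "hd xs = R m" "last xs = R' n"
      using eqv[unfolded ray_equiv_def, rule_format, OF finX] by blast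
    have cD: "c \<in> Dn (range R)" using cc Q by simp
    have cD': "c' \<in> Dn (range R')" using cc Q' by simp
    obtain m1 where m1: "\<And>k. k \<ge> m1 \<Longrightarrow> R k \<in> Up c" using ray_eventually[OF R Dn_fin[OF cD]] by blast
    obtain n1 where n1: "\<And>k. k \<ge> n1 \<Longrightarrow> R' k \<in> Up c'" using ray_eventually[OF R' Dn_fin[OF cD']] by blast
    have "le c (R (m + m1))" using m1[of "m + m1"] unfolding Up_iff by simp
    then have lm: "le c (R m)" using ray_back[OF R, of m c m m1] mn(1) unfolding X_def by blast
    have "le c' (R' (n + n1))" using n1[of "n + n1"] unfolding Up_iff by simp
    then have ln: "le c' (R' n)" using ray_back[OF R', of n c' n n1] mn(2) cc(4) unfolding X_def by blast
    have g: "xs \<noteq> []" "set xs \<subseteq> V - X" "successively (\<lambda>x y. (x,y) \<in> E \<inter> ((V - X) \<times> (V - X))) xs"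
      using mn(3) unfolding gpath_succ by auto
    have s: "successively (\<lambda>x y. (x,y) \<in> E) xs" using g(3) by (rule successively_mono) blast
    have "set xs \<inter> tree_down_strict V E r c = {}" using g(2) unfolding X_def by blast
    then have "\<forall>x\<in>set xs. le c x" using path_up[OF s _ g(1)] lm mn(4) by simp
    then have "le c (R' n)" using mn(5) g(1) last_in_set by fastforce
    then have "R' n \<in> Up c" unfolding Up_iff .
    moreover have "R' n \<in> Up c'" unfolding Up_iff by (rule ln)
    ultimately show ?thesis using cc(3) by blast
  qed
next
  assume eq: "Dn (range R) = Dn (range R')"
  obtain Q where Q: "rray Q" "Dn (range R) = range Q" using ray_Dn[OF R] by blast
  show "ray_equiv V E R R'" unfolding ray_equiv_def
  proof (intro allI impI)
    fix X :: "'a set" assume X: "finite X"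
    obtain n0 where n0: "Up (Q n0) \<inter> X = {}" using Up_avoid[OF Q(1) X] by blast
    define c where "c = Q n0"
    have cD: "c \<in> Dn (range R)" "c \<in> Dn (range R')" using Q eq unfolding c_def by auto
    obtain m where m: "\<And>k. k \<ge> m \<Longrightarrow> R k \<in> Up c" using ray_eventually[OF R Dn_fin[OF cD(1)]] by blast
    obtain n where n: "\<And>k. k \<ge> n \<Longrightarrow> R' k \<in> Up c" using ray_eventually[OF R' Dn_fin[OF cD(2)]] by blast
    have cX: "Up c \<inter> X = {}" using n0 unfolding c_def .
    have r1: "(rel (Up c))\<^sup>*\<^sup>* c (R m)" using reach_up m[of m] unfolding Up_iff by blast
    have r2: "(rel (Up c))\<^sup>*\<^sup>* c (R' n)" using reach_up n[of n] unfolding Up_iff by blast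
    have "(rel (Up c))\<^sup>*\<^sup>* (R m) (R' n)" using rtranclp_trans[OF reach_sym[OF r1] r2] .
    then obtain xs where xs: "gpath (Up c) (E \<inter> Up c \<times> Up c) xs" "hd xs = R m" "last xs = R' n"
      using walk_path m[of m] by blast
    have sub: "set xs \<subseteq> V - X" using xs(1) Up_V cX unfolding gpath_def by blast
    have "gpath (V - X) (E \<inter> ((V - X) \<times> (V - X))) xs"
      by (rule gpath_mono[OF xs(1) sub]) blast
    moreover have "\<forall>k\<ge>m. R k \<notin> X" using m cX by blast
    moreover have "\<forall>k\<ge>n. R' k \<notin> X" using n cX by blast
    ultimately show "\<exists>m n xs. (\<forall>k\<ge>m. R k \<notin> X) \<and> (\<forall>k\<ge>n. R' k \<notin> X) \<and>
         gpath (V - X) (E \<inter> ((V - X) \<times> (V - X))) xs \<and> hd xs = R m \<and> last xs = R' n"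
      using xs by blast
  qed
qed

end

lemma class_bij:
  assumes eq: "\<And>x y. p x \<Longrightarrow> p y \<Longrightarrow> (e x y \<longleftrightarrow> k x = k y)" and img: "k ` {x. p x} = T"
  shows "bij_betw (\<lambda>c. k (SOME x. x \<in> c)) {{y. p y \<and> e x y} | x. p x} T"
proof -
  have cls: "{y. p y \<and> e x y} = {y. p y \<and> k y = k x}" if px: "p x" for x
    using eq[OF px] by auto
  have fk: "k (SOME z. z \<in> {y. p y \<and> e x y}) = k x" if px: "p x" for x
  proof -
    have "x \<in> {y. p y \<and> e x y}" using px eq[OF px px] by simp
    then have "(SOME z. z \<in> {y. p y \<and> e x y}) \<in> {y. p y \<and> e x y}" by (rule someI)
    then show ?thesis using eq[OF px] by auto
  qed
  show ?thesis unfolding bij_betw_def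
  proof
    show "inj_on (\<lambda>c. k (SOME x. x \<in> c)) {{y. p y \<and> e x y} | x. p x}"
    proof (rule inj_onI)
      fix c1 c2 assume c1: "c1 \<in> {{y. p y \<and> e x y} | x. p x}" and c2: "c2 \<in> {{y. p y \<and> e x y} | x. p x}"
        and fe: "k (SOME x. x \<in> c1) = k (SOME x. x \<in> c2)"
      obtain x1 where x1: "p x1" "c1 = {y. p y \<and> e x1 y}" using c1 by blast
      obtain x2 where x2: "p x2" "c2 = {y. p y \<and> e x2 y}" using c2 by blast
      have "k x1 = k x2" using fe fk[OF x1(1)] fk[OF x2(1)] x1(2) x2(2) by simp
      then show "c1 = c2" using cls[OF x1(1)] cls[OF x2(1)] x1(2) x2(2) by simp
    qed
  next
    show "(\<lambda>c. k (SOME x. x \<in> c)) ` {{y. p y \<and> e x y} | x. p x} = T"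
    proof
      show "(\<lambda>c. k (SOME x. x \<in> c)) ` {{y. p y \<and> e x y} | x. p x} \<subseteq> T"
        using fk img by auto
    next
      show "T \<subseteq> (\<lambda>c. k (SOME x. x \<in> c)) ` {{y. p y \<and> e x y} | x. p x}"
      proof
        fix t assume "t \<in> T"
        then obtain x where x: "p x" "t = k x" using img by blast
        then have "t = (\<lambda>c. k (SOME x. x \<in> c)) {y. p y \<and> e x y}" using fk by simp
        moreover have "{y. p y \<and> e x y} \<in> {{y. p y \<and> e x y} | x. p x}" using x by blast
        ultimately show "t \<in> (\<lambda>c. k (SOME x. x \<in> c)) ` {{y. p y \<and> e x y} | x. p x}" by blast
      qed
    qed
  qed
qed

theorem theorem1p2:
  fixes S :: "'a set" and \<F> :: "'a set set"
    and V :: "'a set" and E :: "('a \<times> 'a) set" and r :: 'a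
  assumes "connectoid S \<F>"
    and "normal_spanning_tree S \<F> V E r"
  shows "\<exists>f. bij_betw f (cn_ends S \<F>) (graph_ends V E)"
proof -
  interpret nt S \<F> V E r using assms by unfold_locales
  define T where "T = {range Q | Q. rray Q}"
  have img1: "Dn ` {N. necklace S \<F> N} = T"
  proof
    show "Dn ` {N. necklace S \<F> N} \<subseteq> T" unfolding T_def using neck_Dn by blast
    show "T \<subseteq> Dn ` {N. necklace S \<F> N}"
    proof
      fix t assume "t \<in> T"
      then obtain Q where Q: "rray Q" "t = range Q" unfolding T_def by blast
      obtain N where "necklace S \<F> N" "Dn N = range Q" using neck_surj[OF Q(1)] by blast
      then show "t \<in> Dn ` {N. necklace S \<F> N}" using Q(2) by blast
    qed
  qed
  have img2: "(\<lambda>R. Dn (range R)) ` {R. is_ray V E R} = T"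
  proof
    show "(\<lambda>R. Dn (range R)) ` {R. is_ray V E R} \<subseteq> T" unfolding T_def using ray_Dn by blast
    show "T \<subseteq> (\<lambda>R. Dn (range R)) ` {R. is_ray V E R}"
    proof
      fix t assume "t \<in> T"
      then obtain Q where Q: "rray Q" "t = range Q" unfolding T_def by blast
      have "is_ray V E Q" using Q(1) unfolding rray_def by blast
      moreover have "Dn (range Q) = t" using rray_Dn[OF Q(1)] Q(2) by simp
      ultimately show "t \<in> (\<lambda>R. Dn (range R)) ` {R. is_ray V E R}" by blast
    qed
  qed
  have b1: "bij_betw (\<lambda>c. Dn (SOME x. x \<in> c)) (cn_ends S \<F>) T"
    unfolding cn_ends_def
    by (rule class_bij[of "necklace S \<F>" "necklace_equiv S \<F>" Dn T, OF neck_equiv_iff img1])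
  have b2: "bij_betw (\<lambda>c. Dn (range (SOME x. x \<in> c))) (graph_ends V E) T"
    unfolding graph_ends_def
    by (rule class_bij[of "is_ray V E" "ray_equiv V E" "\<lambda>R. Dn (range R)" T, OF ray_equiv_iff img2])
  have "bij_betw (inv_into (graph_ends V E) (\<lambda>c. Dn (range (SOME x. x \<in> c))) \<circ> (\<lambda>c. Dn (SOME x. x \<in> c)))
     (cn_ends S \<F>) (graph_ends V E)"
    by (rule bij_betw_trans[OF b1 bij_betw_inv_into[OF b2]])
  then show ?thesis by blast
qed



end
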